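(* Let $n\ge 3$ and let $K_n$ be the complete graph on $n$ vertices, equipped with a weak IASI in which a vertex $v$ is not mono-indexed. Then the sparing number $\varphi(K_n)$ equals the number of triangles of $K_n$ that contain $v$.
   Context: Let $\mathbb{N}_0$ be the set of non-negative integers and $\mathcal{P}(\mathbb{N}_0)$ its power set; for $A,B\subseteq\mathbb{N}_0$, $A+B=\{a+b: a\in A, b\in B\}$. All graphs are simple, finite, without isolated vertices. An integer additive set-indexer (IASI) of a graph $G$ is an injective map $f:V(G)\to\mathcal{P}(\mathbb{N}_0)$ such that the induced map $f^+:E(G)\to\mathcal{P}(\mathbb{N}_0)$, $f^+(uv)=f(u)+f(v)$, is also injective. A weak IASI is an IASI $f$ with $|f^+(uv)|=\max(|f(u)|,|f(v)|)$ for every edge $uv$. A vertex $v$ (resp. edge $e$) is mono-indexed if $|f(v)|=1$ (resp. $|f^+(e)|=1$). The sparing number $\varphi(G)$ of a graph $G$ admitting a weak IASI is the minimum number of mono-indexed edges over all weak IASIs of $G$. *)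

theory Defs
  imports Main
begin

text \<open>Graphs: vertex set V, edge set E of 2-element subsets of V.\<close>

definition sumset :: "nat set \<Rightarrow> nat set \<Rightarrow> nat set" where
  "sumset A B = {a + b | a b. a \<in> A \<and> b \<in> B}"

definition iasi :: "'a set \<Rightarrow> 'a set set \<Rightarrow> ('a \<Rightarrow> nat set) \<Rightarrow> bool" where
  "iasi V E f \<longleftrightarrow>
     (\<forall>v\<in>V. f v \<noteq> {} \<and> finite (f v)) \<and> inj_on f V \<and>
     (\<forall>u v x y. {u, v} \<in> E \<longrightarrow> {x, y} \<in> E \<longrightarrow>
        sumset (f u) (f v) = sumset (f x) (f y) \<longrightarrow> {u, v} = {x, y})"

definition weak_iasi :: "'a set \<Rightarrow> 'a set set \<Rightarrow> ('a \<Rightarrow> nat set) \<Rightarrow> bool" where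
  "weak_iasi V E f \<longleftrightarrow> iasi V E f \<and>
     (\<forall>u v. {u, v} \<in> E \<longrightarrow> card (sumset (f u) (f v)) = max (card (f u)) (card (f v)))"

definition mono_edges :: "'a set set \<Rightarrow> ('a \<Rightarrow> nat set) \<Rightarrow> 'a set set" where
  "mono_edges E f = {e \<in> E. \<exists>u v. e = {u, v} \<and> card (sumset (f u) (f v)) = 1}"

definition sparing_number :: "'a set \<Rightarrow> 'a set set \<Rightarrow> nat" where
  "sparing_number V E = (LEAST k. \<exists>f. weak_iasi V E f \<and> card (mono_edges E f) = k)"

definition complete_edges :: "nat \<Rightarrow> nat set set" where
  "complete_edges n = {e. e \<subseteq> {..<n} \<and> card e = 2}"

definition triangles :: "'a set \<Rightarrow> 'a set set \<Rightarrow> 'a set set" where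
  "triangles V E = {T. T \<subseteq> V \<and> card T = 3 \<and> (\<forall>x\<in>T. \<forall>y\<in>T. x \<noteq> y \<longrightarrow> {x, y} \<in> E)}"

end

theory Submission
  imports Defs
begin

lemma sumset_ge:
  assumes "finite A" "finite B" "b \<in> B"
  shows "card A \<le> card (sumset A B)"
proof -
  have "(\<lambda>a. a + b) ` A \<subseteq> sumset A B" using assms by (auto simp: sumset_def)
  moreover have "finite (sumset A B)"
  proof -
    have "sumset A B = (\<lambda>(a,b). a + b) ` (A \<times> B)" by (auto simp: sumset_def)
    thus ?thesis using assms by simp
  qed
  ultimately have "card ((\<lambda>a. a + b) ` A) \<le> card (sumset A B)" by (simp add: card_mono)
  moreover have "card ((\<lambda>a. a + b) ` A) = card A" by (simp add: card_image inj_on_def)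
  ultimately show ?thesis by simp
qed

lemma sumset_finite: "finite A \<Longrightarrow> finite B \<Longrightarrow> finite (sumset A B)"
proof -
  assume "finite A" "finite B"
  have "sumset A B = (\<lambda>(a,b). a + b) ` (A \<times> B)" by (auto simp: sumset_def)
  thus ?thesis using \<open>finite A\<close> \<open>finite B\<close> by simp
qed

lemma sumset_comm: "sumset A B = sumset B A"
  unfolding sumset_def by (metis add.commute)

lemma sumset_gt:
  assumes "finite A" "finite B" "card A \<ge> 2" "card B \<ge> 2"
  shows "card A < card (sumset A B)"
proof -
  have neA: "A \<noteq> {}" and neB: "B \<noteq> {}" using assms by auto
  define b0 where "b0 = Min B"
  define b1 where "b1 = Max B"
  define a1 where "a1 = Max A"
  have b0B: "b0 \<in> B" "b1 \<in> B" using assms neB unfolding b0_def b1_def by auto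
  have "b0 \<noteq> b1"
  proof
    assume "b0 = b1"
    have "\<forall>x\<in>B. x = b0"
    proof
      fix x assume "x \<in> B"
      hence "b0 \<le> x" "x \<le> b1" using assms unfolding b0_def b1_def by auto
      thus "x = b0" using \<open>b0 = b1\<close> by simp
    qed
    hence "B \<subseteq> {b0}" by auto
    hence "card B \<le> card {b0}" by (intro card_mono) auto
    hence "card B \<le> 1" by simp
    thus False using assms by simp
  qed
  moreover have "b0 \<le> b1" using assms b0B unfolding b0_def b1_def by (metis Max_ge)
  ultimately have b01: "b0 < b1" by simp
  have a1A: "a1 \<in> A" using assms neA unfolding a1_def by auto
  let ?S = "insert (a1 + b1) ((\<lambda>a. a + b0) ` A)"
  have "?S \<subseteq> sumset A B" using b0B a1A by (auto simp: sumset_def)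
  hence "card ?S \<le> card (sumset A B)" by (simp add: card_mono sumset_finite assms)
  moreover have "a1 + b1 \<notin> (\<lambda>a. a + b0) ` A"
  proof
    assume "a1 + b1 \<in> (\<lambda>a. a + b0) ` A"
    then obtain a where "a \<in> A" "a1 + b1 = a + b0" by auto
    moreover have "a \<le> a1" using \<open>a \<in> A\<close> assms unfolding a1_def by simp
    ultimately show False using b01 by simp
  qed
  hence "card ?S = card A + 1" using assms by (simp add: card_image inj_on_def)
  ultimately show ?thesis by simp
qed

lemma weak_one_mono:
  assumes "weak_iasi V E g" "{u, w} \<in> E" "u \<in> V" "w \<in> V"
  shows "card (g u) = 1 \<or> card (g w) = 1"
proof (rule ccontr)
  assume h: "\<not> ?thesis"
  have fin: "finite (g u)" "finite (g w)" "g u \<noteq> {}" "g w \<noteq> {}"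
    using assms by (auto simp: weak_iasi_def iasi_def)
  have "card (g u) \<noteq> 0" "card (g w) \<noteq> 0" using fin by auto
  hence "card (g u) \<ge> 2" "card (g w) \<ge> 2" using h by auto
  hence "card (g u) < card (sumset (g u) (g w))" "card (g w) < card (sumset (g w) (g u))"
    using sumset_gt fin by auto
  moreover have "card (sumset (g u) (g w)) = max (card (g u)) (card (g w))"
    using assms by (auto simp: weak_iasi_def)
  ultimately show False by (simp add: sumset_comm max_def split: if_splits)
qed

lemma mono_edge_iff:
  assumes "finite A" "finite B" "A \<noteq> {}" "B \<noteq> {}"
  shows "card (sumset A B) = 1 \<longleftrightarrow> card A = 1 \<and> card B = 1"
proof
  assume h: "card (sumset A B) = 1"
  obtain a b where "a \<in> A" "b \<in> B" using assms by auto
  have "card A \<le> 1" using sumset_ge[of A B b] assms h \<open>b\<in>B\<close> by simp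
  moreover have "card B \<le> 1" using sumset_ge[of B A a] assms h \<open>a\<in>A\<close> by (simp add: sumset_comm)
  moreover have "card A \<noteq> 0" "card B \<noteq> 0" using assms by auto
  ultimately show "card A = 1 \<and> card B = 1" by auto
next
  assume "card A = 1 \<and> card B = 1"
  then obtain a b where "A = {a}" "B = {b}" by (auto simp: card_Suc_eq)
  thus "card (sumset A B) = 1" by (simp add: sumset_def)
qed

lemma mono_edges_eq:
  assumes "weak_iasi {..<n} (complete_edges n) g"
  shows "mono_edges (complete_edges n) g
       = {e. e \<subseteq> {u. u < n \<and> card (g u) = 1} \<and> card e = 2}"
proof -
  have ne: "\<And>u. u < n \<Longrightarrow> finite (g u) \<and> g u \<noteq> {}"
    using assms by (auto simp: weak_iasi_def iasi_def)
  show ?thesis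
  proof (intro set_eqI iffI)
    fix e assume "e \<in> mono_edges (complete_edges n) g"
    hence e0: "e \<in> complete_edges n" "\<exists>u w. e = {u, w} \<and> card (sumset (g u) (g w)) = 1"
      by (simp_all add: mono_edges_def)
    then obtain u w where e: "e = {u, w}" "card (sumset (g u) (g w)) = 1" by blast
    have "e \<subseteq> {..<n}" "card e = 2" using e0(1) by (simp_all add: complete_edges_def)
    hence "u < n" "w < n" using e by auto
    hence "card (g u) = 1 \<and> card (g w) = 1" using mono_edge_iff[of "g u" "g w"] ne[of u] ne[of w] e(2) by simp
    hence "card (g u) = 1" "card (g w) = 1" by simp_all
    thus "e \<in> {e. e \<subseteq> {u. u < n \<and> card (g u) = 1} \<and> card e = 2}" using e \<open>u<n\<close> \<open>w<n\<close> \<open>card e = 2\<close> by auto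
  next
    fix e assume "e \<in> {e. e \<subseteq> {u. u < n \<and> card (g u) = 1} \<and> card e = 2}"
    hence h: "e \<subseteq> {u. u < n \<and> card (g u) = 1}" "card e = 2" by auto
    then obtain u w where e: "e = {u, w}" "u \<noteq> w" by (meson card_2_iff)
    hence "u < n" "w < n" "card (g u) = 1" "card (g w) = 1" using h by auto
    hence "card (sumset (g u) (g w)) = 1" using mono_edge_iff[of "g u" "g w"] ne[of u] ne[of w] by simp
    moreover have "e \<subseteq> {..<n}" using h(1) by blast
    hence "e \<in> complete_edges n" using h(2) by (simp add: complete_edges_def)
    ultimately show "e \<in> mono_edges (complete_edges n) g" using e
      unfolding mono_edges_def by blast
  qed
qed

lemma test2:
  assumes "weak_iasi {..<n} (complete_edges n) g"
  and "x < n" "y < n" "card (g x) \<noteq> 1" "card (g y) \<noteq> 1" "x \<noteq> y"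
  shows False
proof -
  have E: "{x, y} \<in> complete_edges n" using assms by (simp add: complete_edges_def)
  have "x \<in> {..<n}" "y \<in> {..<n}" using assms by simp_all
  from weak_one_mono[OF assms(1) E this] show False using assms by simp
qed

lemma card_S_ge:
  assumes "weak_iasi {..<n} (complete_edges n) g"
  shows "n - 1 \<le> card {u. u < n \<and> card (g u) = 1}"
proof -
  let ?S = "{u. u < n \<and> card (g u) = 1}"
  have "\<forall>x\<in>{..<n} - ?S. \<forall>y\<in>{..<n} - ?S. x = y"
  proof (intro ballI)
    fix x y assume "x \<in> {..<n} - ?S" "y \<in> {..<n} - ?S"
    hence xy: "x < n" "y < n" "card (g x) \<noteq> 1" "card (g y) \<noteq> 1" by auto
    show "x = y"
    proof (rule ccontr)
      assume "x \<noteq> y"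
      from test2[OF assms xy this] show False .
    qed
  qed
  moreover have fin: "finite ({..<n} - ?S)" by simp
  ultimately have c1: "card ({..<n} - ?S) \<le> Suc 0" using card_le_Suc0_iff_eq[OF fin] by blast
  have "?S \<subseteq> {..<n}" by blast
  hence "card ({..<n} - ?S) = n - card ?S"
    using card_Diff_subset[of ?S "{..<n}"] by (simp add: finite_subset)
  with c1 show ?thesis by simp
qed

lemma card_mono_edges:
  assumes "weak_iasi {..<n} (complete_edges n) g"
  shows "card (mono_edges (complete_edges n) g) = card {u. u < n \<and> card (g u) = 1} choose 2"
proof -
  have "finite {u. u < n \<and> card (g u) = 1}" by simp
  thus ?thesis unfolding mono_edges_eq[OF assms] by (rule n_subsets)
qed

theorem proposition2p1:
  fixes n v :: nat and f :: "nat \<Rightarrow> nat set"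
  assumes "n \<ge> 3"
    and "weak_iasi {..<n} (complete_edges n) f"
    and "v < n"
    and "card (f v) \<noteq> 1"
  shows "sparing_number {..<n} (complete_edges n)
           = card {T \<in> triangles {..<n} (complete_edges n). v \<in> T}"
proof -
  let ?k = "(n - 1) choose 2"
  have Sf: "{u. u < n \<and> card (f u) = 1} = {..<n} - {v}"
  proof -
    have "{u. u < n \<and> card (f u) = 1} \<subseteq> {..<n} - {v}" using assms(4) by auto
    moreover have "card ({..<n} - {v}) = n - 1" using assms(3) by simp
    moreover have "n - 1 \<le> card {u. u < n \<and> card (f u) = 1}" using card_S_ge[OF assms(2)] .
    ultimately show ?thesis by (intro card_seteq) simp_all
  qed
  have fk: "card (mono_edges (complete_edges n) f) = ?k"
    using card_mono_edges[OF assms(2)] Sf assms(3) by simp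
  have sp: "sparing_number {..<n} (complete_edges n) = ?k"
    unfolding sparing_number_def
  proof (rule Least_equality)
    show "\<exists>g. weak_iasi {..<n} (complete_edges n) g \<and> card (mono_edges (complete_edges n) g) = ?k"
      using assms(2) fk by blast
  next
    fix y assume "\<exists>g. weak_iasi {..<n} (complete_edges n) g \<and> card (mono_edges (complete_edges n) g) = y"
    then obtain g where g: "weak_iasi {..<n} (complete_edges n) g" "card (mono_edges (complete_edges n) g) = y" by blast
    have "?k \<le> card {u. u < n \<and> card (g u) = 1} choose 2"
      by (rule binomial_right_mono[OF card_S_ge[OF g(1)]])
    thus "?k \<le> y" using g card_mono_edges[OF g(1)] by simp
  qed
  have tri: "{T \<in> triangles {..<n} (complete_edges n). v \<in> T}
      = insert v ` {B. B \<subseteq> {..<n} - {v} \<and> card B = 2}"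
  proof (intro set_eqI iffI)
    fix T assume "T \<in> {T \<in> triangles {..<n} (complete_edges n). v \<in> T}"
    hence T: "T \<subseteq> {..<n}" "card T = 3" "v \<in> T" by (auto simp: triangles_def)
    have "finite T" using T(1) finite_subset by blast
    hence "card (T - {v}) = 2" using T by simp
    moreover have "T = insert v (T - {v})" using T by auto
    moreover have "T - {v} \<subseteq> {..<n} - {v}" using T(1) by blast
    ultimately have "T - {v} \<in> {B. B \<subseteq> {..<n} - {v} \<and> card B = 2}" "T = insert v (T - {v})" by simp_all
    thus "T \<in> insert v ` {B. B \<subseteq> {..<n} - {v} \<and> card B = 2}" by (metis imageI)
  next
    fix T assume "T \<in> insert v ` {B. B \<subseteq> {..<n} - {v} \<and> card B = 2}"
    then obtain B where B: "T = insert v B" "B \<subseteq> {..<n} - {v}" "card B = 2" by auto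
    have "finite B" using B(3) card.infinite by fastforce
    moreover have "v \<notin> B" using B(2) by blast
    ultimately have "card T = 3" using B(1,3) by simp
    moreover have "T \<subseteq> {..<n}" using B assms(3) by auto
    moreover have "\<forall>x\<in>T. \<forall>y\<in>T. x \<noteq> y \<longrightarrow> {x, y} \<in> complete_edges n"
      using \<open>T \<subseteq> {..<n}\<close> by (auto simp: complete_edges_def)
    ultimately show "T \<in> {T \<in> triangles {..<n} (complete_edges n). v \<in> T}"
      using B(1) by (auto simp: triangles_def)
  qed
  have "inj_on (insert v) {B. B \<subseteq> {..<n} - {v} \<and> card B = 2}"
  proof (rule inj_onI)
    fix x y assume "x \<in> {B. B \<subseteq> {..<n} - {v} \<and> card B = 2}" "y \<in> {B. B \<subseteq> {..<n} - {v} \<and> card B = 2}"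
      "insert v x = insert v y"
    hence "v \<notin> x" "v \<notin> y" "insert v x - {v} = insert v y - {v}" by auto
    thus "x = y" by simp
  qed
  hence "card {T \<in> triangles {..<n} (complete_edges n). v \<in> T} = card {B. B \<subseteq> {..<n} - {v} \<and> card B = 2}"
    unfolding tri by (rule card_image)
  also have "\<dots> = ?k" using assms(3) by (simp add: n_subsets)
  finally show ?thesis using sp by simp
qed

end
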